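(* Let $\sigma_1,\sigma_2$ be real $2\times2$ matrices with positive definite symmetric parts $\Sigma_i=\frac{\sigma_i+\sigma_i^T}2$, and $d_i=\det\Sigma_i$. Set $$m=(\sigma_2)_{11}(\sigma_1)_{22}+(\sigma_1)_{11}(\sigma_2)_{22}-\tfrac12\big((\sigma_2)_{12}+(\sigma_2)_{21}\big)\big((\sigma_1)_{12}+(\sigma_1)_{21}\big),$$ $$n=\frac1{\sqrt{d_1d_2}}\Big[\det\sigma_1+\det\sigma_2-\tfrac12\big((\sigma_1)_{21}-(\sigma_1)_{12}\big)\big((\sigma_2)_{21}-(\sigma_2)_{12}\big)\Big].$$ Then $$K^{min}(\sigma_1,\sigma_2)=\sqrt{\frac{m+\sqrt{m^2-4d_1d_2}}{2\sqrt{d_1d_2}}\cdot\frac{n+\sqrt{n^2-4}}{2}}.$$ If moreover $\sigma_1,\sigma_2$ are symmetric, then $K^{min}(\sigma_1,\sigma_2)=\max\{\lambda_1^{-1/2},\lambda_2^{1/2}\}$, where $\lambda_1\le\lambda_2$ are the eigenvalues of $\sigma_1^{-1/2}\sigma_2\sigma_1^{-1/2}$.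
   Context: For a real $2\times2$ matrix $\sigma$ with positive definite symmetric part $\sigma^S$, set $$G(\sigma)=\frac{1}{\sqrt{\det\sigma^S}}\begin{pmatrix}\sigma_{22}&-\frac{\sigma_{12}+\sigma_{21}}2\\-\frac{\sigma_{12}+\sigma_{21}}2&\sigma_{11}\end{pmatrix},\quad H(\sigma)=\frac{1}{\sqrt{\det\sigma^S}}\begin{pmatrix}\det\sigma&\frac{\sigma_{21}-\sigma_{12}}2\\\frac{\sigma_{21}-\sigma_{12}}2&1\end{pmatrix}.$$ With $G_i=G(\sigma_i)$, $H_i=H(\sigma_i)$, $K^{min}(\sigma_1,\sigma_2):=\min_{A,B\in SL(2)}\max_{i=1,2}\lambda_{\max}(B^TG_iB)\lambda_{\max}(A^TH_iA)$, where $SL(2)$ is the set of real $2\times 2$ matrices of determinant $1$ and $\lambda_{\max}$ the largest eigenvalue. $\sigma_1^{-1/2}$ denotes the positive definite square root of $\sigma_1^{-1}$. *)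

theory Defs
  imports "HOL-Analysis.Analysis"
begin

type_synonym mat2 = "real^2^2"

definition sym_part :: "mat2 \<Rightarrow> mat2" where
  "sym_part \<sigma> = (1/2) *\<^sub>R (\<sigma> + transpose \<sigma>)"

definition pos_def :: "mat2 \<Rightarrow> bool" where
  "pos_def M \<longleftrightarrow> (\<forall>v::real^2. v \<noteq> 0 \<longrightarrow> v \<bullet> (M *v v) > 0)"

definition symmetric_mat :: "mat2 \<Rightarrow> bool" where
  "symmetric_mat M \<longleftrightarrow> transpose M = M"

definition eigenvalues :: "mat2 \<Rightarrow> real set" where
  "eigenvalues M = {c. \<exists>v::real^2. v \<noteq> 0 \<and> M *v v = c *\<^sub>R v}"

definition lambda_max :: "mat2 \<Rightarrow> real" where
  "lambda_max M = Max (eigenvalues M)"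

definition lambda_min :: "mat2 \<Rightarrow> real" where
  "lambda_min M = Min (eigenvalues M)"

definition SL2 :: "mat2 set" where
  "SL2 = {A. det A = 1}"

definition Gmat :: "mat2 \<Rightarrow> mat2" where
  "Gmat \<sigma> = (1 / sqrt (det (sym_part \<sigma>))) *\<^sub>R
     (\<chi> i j. if i = 1 \<and> j = 1 then \<sigma>$2$2
             else if i = 2 \<and> j = 2 then \<sigma>$1$1
             else - (\<sigma>$1$2 + \<sigma>$2$1) / 2)"

definition Hmat :: "mat2 \<Rightarrow> mat2" where
  "Hmat \<sigma> = (1 / sqrt (det (sym_part \<sigma>))) *\<^sub>R
     (\<chi> i j. if i = 1 \<and> j = 1 then det \<sigma>
             else if i = 2 \<and> j = 2 then 1
             else (\<sigma>$2$1 - \<sigma>$1$2) / 2)"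

definition Kvals :: "mat2 \<Rightarrow> mat2 \<Rightarrow> real set" where
  "Kvals \<sigma>1 \<sigma>2 = {max (lambda_max (transpose B ** Gmat \<sigma>1 ** B) * lambda_max (transpose A ** Hmat \<sigma>1 ** A))
                        (lambda_max (transpose B ** Gmat \<sigma>2 ** B) * lambda_max (transpose A ** Hmat \<sigma>2 ** A))
                   | A B. A \<in> SL2 \<and> B \<in> SL2}"

definition Kmin :: "mat2 \<Rightarrow> mat2 \<Rightarrow> real" where
  "Kmin \<sigma>1 \<sigma>2 = Inf (Kvals \<sigma>1 \<sigma>2)"

definition pd_sqrt :: "mat2 \<Rightarrow> mat2" where
  "pd_sqrt M = (THE S. symmetric_mat S \<and> pos_def S \<and> S ** S = M)"

end

theory Submission
  imports Defs
begin


definition phi :: "real \<Rightarrow> real" where "phi t = (t + sqrt (t^2 - 4)) / 2"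
definition Bf :: "real \<Rightarrow> real \<Rightarrow> real \<Rightarrow> real \<Rightarrow> real \<Rightarrow> real \<Rightarrow> real" where
  "Bf x y z x' y' z' = x*z' + z*x' - 2*y*y'"
definition inH :: "real \<Rightarrow> real \<Rightarrow> real \<Rightarrow> bool" where
  "inH x y z \<longleftrightarrow> x*z - y^2 = 1 \<and> x > 0"

lemma inH_z: "inH x y z \<Longrightarrow> z > 0"
proof -
  assume h: "inH x y z"
  have "x*z = 1 + y^2" "x > 0" using h unfolding inH_def by auto
  moreover have "1 + y^2 > 0" by (simp add: add_pos_nonneg)
  ultimately show "z > 0" by (metis zero_less_mult_pos)
qed

lemma Bf_sym: "Bf x y z x' y' z' = Bf x' y' z' x y z"
  unfolding Bf_def by simp

lemma Bf_ge2:
  assumes "inH x y z" "inH x' y' z'"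
  shows "Bf x y z x' y' z' \<ge> 2"
proof -
  have h1: "x*z = 1 + y^2" "x'*z' = 1 + y'^2" "x > 0" "x' > 0" using assms unfolding inH_def by auto
  have "x*x' * (Bf x y z x' y' z' - 2) = (x-x')^2 + (x*y'-x'*y)^2"
  proof -
    have "x*x' * (Bf x y z x' y' z' - 2) = x*x*(x'*z') + x'*x'*(x*z) - 2*y*y'*x*x' - 2*x*x'"
      unfolding Bf_def by (simp add: algebra_simps)
    also have "\<dots> = (x-x')^2 + (x*y'-x'*y)^2" unfolding h1 by (simp add: power2_eq_square algebra_simps)
    finally show ?thesis .
  qed
  hence "x*x' * (Bf x y z x' y' z' - 2) \<ge> 0" by simp
  moreover have "x*x' > 0" using h1 by simp
  ultimately have "Bf x y z x' y' z' - 2 \<ge> 0" by (simp add: zero_le_mult_iff)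
  thus ?thesis by simp
qed

lemma gram:
  fixes x y z x1 y1 z1 x2 y2 z2 :: real
  shows "4*(x*z-y^2)*(x1*z1-y1^2)*(x2*z2-y2^2) + (x*z1+z*x1-2*y*y1)*(x*z2+z*x2-2*y*y2)*(x1*z2+z1*x2-2*y1*y2)
     - (x*z-y^2)*(x1*z2+z1*x2-2*y1*y2)^2 - (x1*z1-y1^2)*(x*z2+z*x2-2*y*y2)^2 - (x2*z2-y2^2)*(x*z1+z*x1-2*y*y1)^2
   = (x*(z1*y2 - y1*z2) - z*(x1*y2 - y1*x2) + y*(x1*z2 - z1*x2))^2"
  by algebra

lemma sq4: "t \<ge> 2 \<Longrightarrow> t^2 - 4 \<ge> (0::real)"
proof -
  assume t: "t \<ge> 2"
  have "2*2 \<le> t*t" using mult_mono[of 2 t 2 t] t by simp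
  thus ?thesis by (simp add: power2_eq_square)
qed

lemma gramB:
  "4*(x*z-y^2)*(p*r-q^2)*(u*w-v^2) + Bf x y z p q r * Bf x y z u v w * Bf p q r u v w
     - (x*z-y^2)*(Bf p q r u v w)^2 - (p*r-q^2)*(Bf x y z u v w)^2 - (u*w-v^2)*(Bf x y z p q r)^2
   = (x*(r * v - q*w) - z*(p * v - q*u) + y*(p*w - r*u))^2"
  unfolding Bf_def by (rule gram)

lemma phi_ge1: "t \<ge> 2 \<Longrightarrow> phi t \<ge> 1"
proof -
  assume "t \<ge> 2"
  moreover have "sqrt (t^2 - 4) \<ge> 0" using sq4[OF \<open>t \<ge> 2\<close>] by simp
  ultimately have "t + sqrt (t^2 - 4) \<ge> 2" by linarith
  thus ?thesis unfolding phi_def by simp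
qed

lemma phi_pos: "t \<ge> 2 \<Longrightarrow> phi t > 0"
  using phi_ge1 by force

lemma phi_recip: "t \<ge> 2 \<Longrightarrow> 1 / phi t = (t - sqrt (t^2-4)) / 2"
proof -
  assume t: "t \<ge> 2"
  have t4: "t^2 - 4 \<ge> 0" using t by (rule sq4)
  have s: "(sqrt (t^2-4))^2 = t^2 - 4" using t4 by simp
  have "phi t * ((t - sqrt (t^2-4)) / 2) = 1"
    unfolding phi_def using s by (simp add: field_simps power2_eq_square)
  thus ?thesis using phi_pos[OF t] by (simp add: field_simps)
qed

lemma phi_le:
  assumes t: "t \<ge> 2" and P: "P \<ge> 1" and le: "t \<le> P + 1/P"
  shows "phi t \<le> P"
proof -
  have P0: "P > 0" using P by simp
  have b: "P*t \<le> P^2 + 1"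
  proof -
    have "P*t \<le> P*(P + 1/P)" using le P0 by (simp add: mult_left_mono)
    also have "\<dots> = P^2 + 1" using P0 by (simp add: field_simps power2_eq_square)
    finally show ?thesis .
  qed
  have c: "P^2 \<ge> 1" using P by (simp add: one_le_power)
  have "sqrt (t^2 - 4) \<le> 2*P - t"
  proof (rule real_le_lsqrt)
    show "0 \<le> 2*P - t"
    proof -
      have "P*(2*P-t) = 2*P^2 - P*t" by (simp add: power2_eq_square algebra_simps)
      hence "P*(2*P-t) \<ge> 0" using b c by simp
      thus ?thesis using P0 by (simp add: zero_le_mult_iff)
    qed
    have "(2*P - t)^2 = 4*P^2 - 4*(P*t) + t^2" by (simp add: power2_eq_square algebra_simps)
    thus "t^2 - 4 \<le> (2*P - t)^2" using b by simp
  qed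
  thus ?thesis unfolding phi_def by simp
qed



lemma phi_mult_recip:
  assumes a: "a \<ge> 2" and b: "b \<ge> 2"
  shows "phi a * phi b + 1/(phi a * phi b) = (a*b + sqrt (a^2-4) * sqrt (b^2-4)) / 2"
proof -
  have "1/(phi a * phi b) = (1/phi a) * (1/phi b)" by simp
  thus ?thesis unfolding phi_recip[OF a] phi_recip[OF b] by (simp add: phi_def field_simps)
qed

lemma tri:
  assumes w: "inH x y z" and u: "inH x1 y1 z1" and v: "inH x2 y2 z2"
  shows "phi (Bf x1 y1 z1 x2 y2 z2) \<le> phi (Bf x y z x1 y1 z1) * phi (Bf x y z x2 y2 z2)"
proof -
  define a where "a = Bf x y z x1 y1 z1"
  define b where "b = Bf x y z x2 y2 z2"
  define c where "c = Bf x1 y1 z1 x2 y2 z2"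
  have a2: "a \<ge> 2" unfolding a_def using Bf_ge2 w u by blast
  have b2: "b \<ge> 2" unfolding b_def using Bf_ge2 w v by blast
  have c2: "c \<ge> 2" unfolding c_def using Bf_ge2 v u by blast
  have q: "x*z-y^2 = 1" "x1*z1-y1^2 = 1" "x2*z2-y2^2 = 1" using w u v unfolding inH_def by auto
  have "4*1*1*1 + a*b*c - 1*c^2 - 1*b^2 - 1*a^2 = (x*(z1*y2 - y1*z2) - z*(x1*y2 - y1*x2) + y*(x1*z2 - z1*x2))^2"
    using gramB[where x=x and y=y and z=z and p=x1 and q=y1 and r=z1 and u=x2 and v=y2 and w=z2] by (simp only: q a_def[symmetric] b_def[symmetric] c_def[symmetric])
  hence "4 + a*b*c - a^2 - b^2 - c^2 = (x*(z1*y2 - y1*z2) - z*(x1*y2 - y1*x2) + y*(x1*z2 - z1*x2))^2" by simp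
  hence g: "4 + a*b*c - a^2 - b^2 - c^2 \<ge> 0" by simp
  have key: "2*c \<le> a*b + sqrt (a^2-4) * sqrt (b^2-4)"
  proof (cases "2*c \<le> a*b")
    case True
    have "sqrt (a^2-4) * sqrt (b^2-4) \<ge> 0" using sq4[OF a2] sq4[OF b2] by simp
    thus ?thesis using True by linarith
  next
    case False
    have "(2*c - a*b)^2 \<le> (a^2-4)*(b^2-4)"
      using g by (simp add: power2_eq_square algebra_simps)
    also have "\<dots> = (sqrt (a^2-4) * sqrt (b^2-4))^2"
      using sq4[OF a2] sq4[OF b2] by (simp add: power_mult_distrib)
    finally have "2*c - a*b \<le> sqrt (a^2-4) * sqrt (b^2-4)"
      by (rule power2_le_imp_le) (use sq4[OF a2] sq4[OF b2] in simp)
    thus ?thesis by simp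
  qed
  have P1: "phi a * phi b \<ge> 1" using phi_ge1[OF a2] phi_ge1[OF b2]
    by (metis mult_le_cancel_left1 order_trans zero_less_one less_le_trans mult_mono zero_le_one mult_1)
  show ?thesis unfolding a_def[symmetric] b_def[symmetric] c_def[symmetric]
    apply (rule phi_le[OF c2 P1])
    using key phi_mult_recip[OF a2 b2] by simp
qed

lemma Bf_lin1: "Bf (s*(x1+x2)) (s*(y1+y2)) (s*(z1+z2)) x y z = s * (Bf x1 y1 z1 x y z + Bf x2 y2 z2 x y z)"
  unfolding Bf_def by (simp add: algebra_simps)

lemma mid:
  assumes u: "inH x1 y1 z1" and v: "inH x2 y2 z2"
  defines "c \<equiv> Bf x1 y1 z1 x2 y2 z2"
  defines "k \<equiv> sqrt (2 + c)"
  shows "inH ((x1+x2)/k) ((y1+y2)/k) ((z1+z2)/k)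
     \<and> Bf ((x1+x2)/k) ((y1+y2)/k) ((z1+z2)/k) x1 y1 z1 = k
     \<and> Bf ((x1+x2)/k) ((y1+y2)/k) ((z1+z2)/k) x2 y2 z2 = k
     \<and> (phi k)^2 = phi c"
proof -
  have c2: "c \<ge> 2" unfolding c_def using Bf_ge2 u v by blast
  have q: "x1*z1-y1^2 = 1" "x2*z2-y2^2 = 1" "x1 > 0" "x2 > 0" using u v unfolding inH_def by auto
  have kpos: "k > 0" unfolding k_def using c2 by simp
  have kk: "k^2 = 2 + c" unfolding k_def using c2 by simp
  have "((x1+x2)/k)*((z1+z2)/k) - ((y1+y2)/k)^2 = ((x1*z1-y1^2) + (x2*z2-y2^2) + c)/k^2"
    unfolding c_def Bf_def using kpos by (simp add: field_simps power2_eq_square)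
  also have "\<dots> = 1" unfolding q kk using c2 by simp
  finally have h1: "inH ((x1+x2)/k) ((y1+y2)/k) ((z1+z2)/k)" unfolding inH_def using q kpos by simp
  have h2: "Bf ((x1+x2)/k) ((y1+y2)/k) ((z1+z2)/k) x1 y1 z1 = (2*(x1*z1-y1^2) + c)/k"
    unfolding c_def Bf_def using kpos by (simp add: field_simps power2_eq_square)
  have h3: "Bf ((x1+x2)/k) ((y1+y2)/k) ((z1+z2)/k) x2 y2 z2 = (2*(x2*z2-y2^2) + c)/k"
    unfolding c_def Bf_def using kpos by (simp add: field_simps power2_eq_square)
  have e: "(2+c)/k = k" using kk kpos by (simp add: field_simps power2_eq_square)
  have "(phi k)^2 = phi c"
  proof -
    have s1: "k^2 - 4 = c - 2" using kk by simp
    have "(phi k)^2 = (k^2 + 2*(k * sqrt(c-2)) + (c-2))/4"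
      unfolding phi_def s1 using c2 by (simp add: power2_eq_square field_simps)
    moreover have "k * sqrt(c-2) = sqrt (c^2-4)"
      unfolding k_def by (simp add: real_sqrt_mult[symmetric] power2_eq_square algebra_simps)
    ultimately show ?thesis unfolding phi_def kk by (simp add: field_simps)
  qed
  thus ?thesis using h1 h2 h3 e q by simp
qed

lemma phi_inv:
  assumes p: "p > 0" shows "phi (p + 1/p) = max p (1/p)"
proof -
  have "(p + 1/p)^2 - 4 = (p - 1/p)^2" using p by (simp add: power2_eq_square field_simps)
  hence "sqrt ((p + 1/p)^2 - 4) = \<bar>p - 1/p\<bar>" by simp
  thus ?thesis unfolding phi_def by (simp add: max_def abs_if)
qed



lemmas mm2 = matrix_matrix_mult_def sum_2 transpose_def matrix_vector_mult_def

lemma vec2_eq: "(v::real^2) = w \<longleftrightarrow> v$1 = w$1 \<and> v$2 = w$2"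
  by (simp add: vec_eq_iff forall_2)

lemma mat2_eq: "(A::mat2) = B \<longleftrightarrow> A$1$1 = B$1$1 \<and> A$1$2 = B$1$2 \<and> A$2$1 = B$2$1 \<and> A$2$2 = B$2$2"
  by (simp add: vec_eq_iff forall_2)

lemma vec2_nz: "(v::real^2) \<noteq> 0 \<longleftrightarrow> v$1 \<noteq> 0 \<or> v$2 \<noteq> 0"
  by (simp add: vec2_eq)

definition mk2 :: "real \<Rightarrow> real \<Rightarrow> real \<Rightarrow> real \<Rightarrow> mat2" where
  "mk2 a b c d = vector [vector [a,b], vector [c,d]]"

lemma mk2_simps[simp]: "mk2 a b c d $1$1 = a" "mk2 a b c d $1$2 = b" "mk2 a b c d $2$1 = c" "mk2 a b c d $2$2 = d"
  unfolding mk2_def by simp_all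

lemma eig_sym:
  fixes M :: mat2
  assumes s: "M$1$2 = M$2$1"
  shows "eigenvalues M = {r. r^2 - (M$1$1 + M$2$2)*r + det M = 0}"
proof (intro set_eqI iffI)
  fix r assume "r \<in> eigenvalues M"
  then obtain v :: "real^2" where v: "v \<noteq> 0" "M *v v = r *\<^sub>R v" unfolding eigenvalues_def by auto
  have e1: "(M$1$1 - r)* v$1 + M$1$2* v$2 = 0" and e2: "M$2$1* v$1 + (M$2$2 - r)* v$2 = 0"
    using v(2) unfolding vec2_eq by (simp_all add: mm2 algebra_simps)
  have "((M$1$1 - r)*(M$2$2 - r) - M$1$2*M$2$1) * v$1 = 0"
  proof -
    have "((M$1$1 - r)*(M$2$2 - r) - M$1$2*M$2$1) * v$1 = (M$2$2 - r)*((M$1$1 - r)* v$1 + M$1$2* v$2) - M$1$2*(M$2$1* v$1 + (M$2$2 - r)* v$2)"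
      by (simp add: algebra_simps)
    thus ?thesis using e1 e2 by simp
  qed
  moreover have "((M$1$1 - r)*(M$2$2 - r) - M$1$2*M$2$1) * v$2 = 0"
  proof -
    have "((M$1$1 - r)*(M$2$2 - r) - M$1$2*M$2$1) * v$2 = (M$1$1 - r)*(M$2$1* v$1 + (M$2$2 - r)* v$2) - M$2$1*((M$1$1 - r)* v$1 + M$1$2* v$2)"
      by (simp add: algebra_simps)
    thus ?thesis using e1 e2 by simp
  qed
  ultimately have "(M$1$1 - r)*(M$2$2 - r) - M$1$2*M$2$1 = 0" using v(1) unfolding vec2_nz by auto
  thus "r \<in> {r. r^2 - (M$1$1 + M$2$2)*r + det M = 0}" by (simp add: det_2 power2_eq_square algebra_simps)
next
  fix r assume "r \<in> {r. r^2 - (M$1$1 + M$2$2)*r + det M = 0}"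
  hence p: "(M$1$1 - r)*(M$2$2 - r) - M$1$2*M$2$1 = 0" by (simp add: det_2 power2_eq_square algebra_simps)
  show "r \<in> eigenvalues M"
  proof (cases "M$1$2 = 0 \<and> r = M$1$1")
    case True
    let ?v = "vector [1, 0] :: real^2"
    have "?v \<noteq> 0" by (simp add: vec2_nz)
    moreover have "M *v ?v = r *\<^sub>R ?v" using True s by (simp add: vec2_eq mm2)
    ultimately show ?thesis unfolding eigenvalues_def by blast
  next
    case False
    let ?v = "vector [M$1$2, r - M$1$1] :: real^2"
    have "?v \<noteq> 0" using False by (simp add: vec2_nz)
    moreover have "M *v ?v = r *\<^sub>R ?v" using p s by (simp add: vec2_eq mm2 algebra_simps)
    ultimately show ?thesis unfolding eigenvalues_def by blast
  qed
qed


lemma lam_sym: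
  fixes M :: mat2
  assumes s: "M$1$2 = M$2$1"
  defines "t \<equiv> M$1$1 + M$2$2"
  defines "q \<equiv> sqrt (t^2 - 4 * det M)"
  shows "lambda_max M = (t + q)/2 \<and> lambda_min M = (t - q)/2"
proof -
  have disc: "t^2 - 4 * det M = (M$1$1 - M$2$2)^2 + 4 * (M$1$2)^2"
    unfolding t_def det_2 using s by (simp add: power2_eq_square algebra_simps)
  hence d0: "t^2 - 4 * det M \<ge> 0" by simp
  have qq: "q^2 = t^2 - 4 * det M" unfolding q_def using d0 by simp
  have q0: "q \<ge> 0" unfolding q_def using d0 by simp
  have fact: "\<And>r. r^2 - t*r + det M = (r - (t+q)/2) * (r - (t-q)/2)"
    using qq by (simp add: power2_eq_square field_simps)
  have E: "eigenvalues M = {(t+q)/2, (t-q)/2}"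
    unfolding eig_sym[OF s] t_def[symmetric] fact by auto
  show ?thesis unfolding lambda_max_def lambda_min_def E using q0 by (simp add: max_def min_def)
qed

lemma lam_det1:
  fixes M :: mat2
  assumes s: "M$1$2 = M$2$1" and d: "det M = 1"
  shows "lambda_max M = phi (M$1$1 + M$2$2)"
  using lam_sym[OF s] d unfolding phi_def by simp

definition wx :: "mat2 \<Rightarrow> real" where "wx B = (B$2$1)^2 + (B$2$2)^2"
definition wy :: "mat2 \<Rightarrow> real" where "wy B = - (B$1$1 * B$2$1 + B$1$2 * B$2$2)"
definition wz :: "mat2 \<Rightarrow> real" where "wz B = (B$1$1)^2 + (B$1$2)^2"

lemma w_inH:
  assumes "det B = 1" shows "inH (wx B) (wy B) (wz B)"
proof -
  have e: "wx B * wz B - (wy B)^2 = (det B)^2"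
    unfolding wx_def wy_def wz_def det_2 by (simp add: power2_eq_square algebra_simps)
  have "wx B \<noteq> 0"
  proof
    assume "wx B = 0"
    hence "B$2$1 = 0" "B$2$2 = 0" unfolding wx_def by (simp_all add: sum_power2_eq_zero_iff)
    hence "det B = 0" unfolding det_2 by simp
    thus False using assms by simp
  qed
  hence "wx B > 0" unfolding wx_def by (simp add: order_neq_le_trans)
  thus ?thesis unfolding inH_def e assms by simp
qed

lemma lam_congr:
  fixes B G :: mat2
  assumes dB: "det B = 1" and dG: "det G = 1" and s: "G$1$2 = G$2$1"
  shows "lambda_max (transpose B ** G ** B) = phi (Bf (wx B) (wy B) (wz B) (G$1$1) (G$1$2) (G$2$2))"
proof -
  let ?M = "transpose B ** G ** B"
  have dM: "det ?M = 1" using dB dG by (simp add: det_mul det_transpose)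
  have sM: "?M$1$2 = ?M$2$1" using s by (simp add: mm2 algebra_simps)
  have tr: "?M$1$1 + ?M$2$2 = Bf (wx B) (wy B) (wz B) (G$1$1) (G$1$2) (G$2$2)"
    using s unfolding Bf_def wx_def wy_def wz_def by (simp add: mm2 power2_eq_square algebra_simps)
  show ?thesis using lam_det1[OF sM dM] tr by simp
qed

lemma chol:
  assumes "inH x y z"
  shows "\<exists>B. det B = 1 \<and> wx B = x \<and> wy B = y \<and> wz B = z"
proof -
  have z: "z > 0" using inH_z[OF assms] .
  have xz: "x*z = 1 + y^2" using assms unfolding inH_def by simp
  define B where "B = mk2 (sqrt z) 0 (- y / sqrt z) (1 / sqrt z)"
  have sz: "sqrt z > 0" "(sqrt z)^2 = z" using z by auto
  have "det B = 1" unfolding B_def det_2 using sz by simp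
  moreover have "wx B = x"
  proof -
    have "wx B = (y^2 + 1)/z" unfolding wx_def B_def using sz by (simp add: power_divide field_simps)
    also have "\<dots> = x" using xz z by (simp add: field_simps)
    finally show ?thesis .
  qed
  moreover have "wy B = y" unfolding wy_def B_def using sz by (simp add: field_simps)
  moreover have "wz B = z" unfolding wz_def B_def using sz by simp
  ultimately show ?thesis by blast
qed


lemma sym_part_simps[simp]:
  "sym_part s $1$1 = s$1$1" "sym_part s $2$2 = s$2$2"
  "sym_part s $1$2 = (s$1$2 + s$2$1)/2" "sym_part s $2$1 = (s$1$2 + s$2$1)/2"
  unfolding sym_part_def by (simp_all add: transpose_def)

lemma quad2: "(v::real^2) \<bullet> (M *v v) = M$1$1 * (v$1)^2 + (M$1$2 + M$2$1) * v$1 * v$2 + M$2$2 * (v$2)^2"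
  by (simp add: inner_vec_def sum_2 matrix_vector_mult_def power2_eq_square algebra_simps)

lemma pd_facts:
  assumes pd: "pos_def M" and s: "M$1$2 = M$2$1"
  shows "M$1$1 > 0" "det M > 0"
proof -
  have "(vector [1,0] :: real^2) \<bullet> (M *v vector [1,0]) > 0"
    using pd unfolding pos_def_def by (auto simp: vec2_nz)
  thus a: "M$1$1 > 0" unfolding quad2 by simp
  have "(vector [M$1$2, - M$1$1] :: real^2) \<bullet> (M *v vector [M$1$2, - M$1$1]) > 0"
    using pd a unfolding pos_def_def by (auto simp: vec2_nz)
  hence "M$1$1 * det M > 0" unfolding quad2 det_2 using s by (simp add: power2_eq_square algebra_simps)
  thus "det M > 0" using a by (simp add: zero_less_mult_iff)
qed

lemma pd_from:
  assumes s: "M$1$2 = M$2$1" and a: "M$1$1 > 0" and d: "det M > 0"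
  shows "pos_def M"
  unfolding pos_def_def
proof (intro allI impI)
  fix v :: "real^2" assume v: "v \<noteq> 0"
  have e: "M$1$1 * (v \<bullet> (M *v v)) = (M$1$1 * v$1 + M$1$2 * v$2)^2 + det M * (v$2)^2"
    unfolding quad2 det_2 using s by (simp add: power2_eq_square algebra_simps)
  have "(M$1$1 * v$1 + M$1$2 * v$2)^2 + det M * (v$2)^2 > 0"
  proof (cases "v$2 = 0")
    case True
    hence "v$1 \<noteq> 0" using v vec2_nz by auto
    thus ?thesis using True a by simp
  next
    case False
    hence "det M * (v$2)^2 > 0" using d by simp
    thus ?thesis by (simp add: add_nonneg_pos)
  qed
  hence "M$1$1 * (v \<bullet> (M *v v)) > 0" using e by simp
  thus "v \<bullet> (M *v v) > 0" using a by (simp add: zero_less_mult_iff)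
qed

lemma sym_d_pos:
  assumes "pos_def (sym_part s)"
  shows "s$1$1 > 0" "det (sym_part s) > 0" "det (sym_part s) = s$1$1 * s$2$2 - ((s$1$2 + s$2$1)/2)^2"
  using pd_facts[OF assms] by (simp_all add: det_2 power2_eq_square)

lemma Gmat_simps[simp]:
  "Gmat s $1$1 = s$2$2 / sqrt (det (sym_part s))" "Gmat s $2$2 = s$1$1 / sqrt (det (sym_part s))"
  "Gmat s $1$2 = - (s$1$2 + s$2$1)/2 / sqrt (det (sym_part s))" "Gmat s $2$1 = - (s$1$2 + s$2$1)/2 / sqrt (det (sym_part s))"
  unfolding Gmat_def by simp_all

lemma Hmat_simps[simp]:
  "Hmat s $1$1 = det s / sqrt (det (sym_part s))" "Hmat s $2$2 = 1 / sqrt (det (sym_part s))"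
  "Hmat s $1$2 = (s$2$1 - s$1$2)/2 / sqrt (det (sym_part s))" "Hmat s $2$1 = (s$2$1 - s$1$2)/2 / sqrt (det (sym_part s))"
  unfolding Hmat_def by simp_all


lemma G_props:
  assumes pd: "pos_def (sym_part s)"
  shows "Gmat s $1$2 = Gmat s $2$1" "det (Gmat s) = 1" "inH (Gmat s $1$1) (Gmat s $1$2) (Gmat s $2$2)"
proof -
  define d where "d = det (sym_part s)"
  have d0: "d > 0" and s11: "s$1$1 > 0" and dd: "d = s$1$1 * s$2$2 - ((s$1$2 + s$2$1)/2)^2"
    using sym_d_pos[OF pd] unfolding d_def by auto
  define r where "r = sqrt d"
  have r: "r > 0" "r * r = d" unfolding r_def using d0 by auto
  have "s$1$1 * s$2$2 > 0" using d0 dd by (smt (verit) zero_le_power2)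
  hence s22: "s$2$2 > 0" using s11 by (simp add: zero_less_mult_iff)
  show "Gmat s $1$2 = Gmat s $2$1" by simp
  have "det (Gmat s) = (s$1$1 * s$2$2 - ((s$1$2 + s$2$1)/2)^2) / (r * r)"
    unfolding det_2[of "Gmat s"] Gmat_simps d_def[symmetric] r_def[symmetric] using r(1) by (simp add: field_simps power2_eq_square)
  also have "\<dots> = d / d" by (simp only: r(2) dd[symmetric])
  also have "\<dots> = 1" using d0 by simp
  finally show dG: "det (Gmat s) = 1" .
  show "inH (Gmat s $1$1) (Gmat s $1$2) (Gmat s $2$2)"
  proof -
    have "Gmat s$1$1 * Gmat s$2$2 - (Gmat s$1$2)^2 = 1" using dG unfolding det_2[of "Gmat s"] by (simp add: power2_eq_square)
    moreover have "Gmat s$1$1 > 0" using s22 sym_d_pos(2)[OF pd] by simp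
    ultimately show ?thesis unfolding inH_def by simp
  qed
qed

lemma H_props:
  assumes pd: "pos_def (sym_part s)"
  shows "Hmat s $1$2 = Hmat s $2$1" "det (Hmat s) = 1" "inH (Hmat s $1$1) (Hmat s $1$2) (Hmat s $2$2)"
proof -
  define d where "d = det (sym_part s)"
  have d0: "d > 0" and dd: "d = s$1$1 * s$2$2 - ((s$1$2 + s$2$1)/2)^2"
    using sym_d_pos[OF pd] unfolding d_def by auto
  define r where "r = sqrt d"
  have r: "r > 0" "r * r = d" unfolding r_def using d0 by auto
  have ds: "det s = d + ((s$2$1 - s$1$2)/2)^2" unfolding dd det_2 by (simp add: power2_eq_square field_simps)
  hence ds0: "det s > 0" using d0 by (smt (verit) zero_le_power2)
  show "Hmat s $1$2 = Hmat s $2$1" by simp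
  have "det (Hmat s) = (det s - ((s$2$1 - s$1$2)/2)^2) / (r * r)"
    unfolding det_2[of "Hmat s"] Hmat_simps d_def[symmetric] r_def[symmetric] using r(1) by (simp add: field_simps power2_eq_square)
  also have "\<dots> = d / d" using ds by (simp only: r(2)) simp
  also have "\<dots> = 1" using d0 by simp
  finally show dH: "det (Hmat s) = 1" .
  show "inH (Hmat s $1$1) (Hmat s $1$2) (Hmat s $2$2)"
  proof -
    have "Hmat s$1$1 * Hmat s$2$2 - (Hmat s$1$2)^2 = 1" using dH unfolding det_2[of "Hmat s"] by (simp add: power2_eq_square)
    moreover have "Hmat s$1$1 > 0" using ds0 sym_d_pos(2)[OF pd] by simp
    ultimately show ?thesis unfolding inH_def by simp
  qed
qed

lemma Bf_G:
  assumes "pos_def (sym_part s1)" "pos_def (sym_part s2)"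
  shows "Bf (Gmat s1 $1$1) (Gmat s1 $1$2) (Gmat s1 $2$2) (Gmat s2 $1$1) (Gmat s2 $1$2) (Gmat s2 $2$2)
    = (s2$1$1 * s1$2$2 + s1$1$1 * s2$2$2 - (1/2) * (s2$1$2 + s2$2$1) * (s1$1$2 + s1$2$1)) / sqrt (det (sym_part s1) * det (sym_part s2))"
proof -
  define r1 where "r1 = sqrt (det (sym_part s1))"
  define r2 where "r2 = sqrt (det (sym_part s2))"
  have "r1 > 0" "r2 > 0" unfolding r1_def r2_def using sym_d_pos(2)[OF assms(1)] sym_d_pos(2)[OF assms(2)] by auto
  thus ?thesis unfolding Bf_def Gmat_simps real_sqrt_mult r1_def[symmetric] r2_def[symmetric] by (simp add: field_simps)
qed

lemma Bf_H:
  assumes "pos_def (sym_part s1)" "pos_def (sym_part s2)"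
  shows "Bf (Hmat s1 $1$1) (Hmat s1 $1$2) (Hmat s1 $2$2) (Hmat s2 $1$1) (Hmat s2 $1$2) (Hmat s2 $2$2)
    = (1 / sqrt (det (sym_part s1) * det (sym_part s2))) * (det s1 + det s2 - (1/2) * (s1$2$1 - s1$1$2) * (s2$2$1 - s2$1$2))"
proof -
  define r1 where "r1 = sqrt (det (sym_part s1))"
  define r2 where "r2 = sqrt (det (sym_part s2))"
  have "r1 > 0" "r2 > 0" unfolding r1_def r2_def using sym_d_pos(2)[OF assms(1)] sym_d_pos(2)[OF assms(2)] by auto
  thus ?thesis unfolding Bf_def Hmat_simps real_sqrt_mult r1_def[symmetric] r2_def[symmetric] by (simp add: field_simps)
qed



lemma mat1_simps[simp]: "(mat 1 :: mat2) $1$1 = 1" "(mat 1 :: mat2) $2$2 = 1" "(mat 1 :: mat2) $1$2 = 0" "(mat 1 :: mat2) $2$1 = 0"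
  by (simp_all add: mat_def)

lemma det_mk2_div: "t \<noteq> 0 \<Longrightarrow> det (mk2 (a/t) (b/t) (c/t) (d/t)) = (a*d - b*c)/(t*t)"
  by (simp add: det_2 field_simps)

lemma mk2_sq: "t \<noteq> 0 \<Longrightarrow> mk2 (a/t) (b/t) (b/t) (c/t) ** mk2 (a/t) (b/t) (b/t) (c/t)
   = mk2 ((a*a+b*b)/(t*t)) ((a*b+b*c)/(t*t)) ((a*b+b*c)/(t*t)) ((b*b+c*c)/(t*t))"
  unfolding mat2_eq by (simp add: mm2 field_simps)

lemma minv:
  fixes s :: mat2
  assumes d: "det s \<noteq> 0"
  shows "matrix_inv s = mk2 (s$2$2 / det s) (- s$1$2 / det s) (- s$2$1 / det s) (s$1$1 / det s)"
proof -
  define E where "E = mk2 (s$2$2 / det s) (- s$1$2 / det s) (- s$2$1 / det s) (s$1$1 / det s)"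
  have dd: "det s = s$1$1 * s$2$2 - s$1$2 * s$2$1" by (simp add: det_2)
  have E1: "s ** E = mat 1" and E2: "E ** s = mat 1"
    unfolding E_def mat2_eq using d by (simp_all add: mm2 field_simps dd[symmetric])
  have "\<exists>A'. s ** A' = mat 1 \<and> A' ** s = mat 1" using E1 E2 by blast
  hence M: "s ** matrix_inv s = mat 1 \<and> matrix_inv s ** s = mat 1"
    unfolding matrix_inv_def by (rule someI_ex)
  have "matrix_inv s = matrix_inv s ** (s ** E)" using E1 by simp
  also have "\<dots> = (matrix_inv s ** s) ** E" by (simp add: matrix_mul_assoc)
  also have "\<dots> = E" using M by simp
  finally show ?thesis unfolding E_def .
qed

lemma pd_sqrt_props:
  fixes N :: mat2
  assumes s: "N$1$2 = N$2$1" and a: "N$1$1 > 0" and d: "det N > 0"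
  shows "symmetric_mat (pd_sqrt N) \<and> pd_sqrt N ** pd_sqrt N = N"
proof -
  define \<delta> where "\<delta> = sqrt (det N)"
  have dl: "\<delta> > 0" "\<delta> * \<delta> = det N" unfolding \<delta>_def using d by auto
  have dN: "det N = N$1$1 * N$2$2 - N$1$2 * N$1$2" using s by (simp add: det_2)
  have n22: "N$2$2 > 0"
  proof -
    have "N$1$1 * N$2$2 = det N + N$1$2 * N$1$2" using dN by simp
    hence "N$1$1 * N$2$2 > 0" using d by (simp add: add_pos_nonneg)
    thus ?thesis using a by (simp add: zero_less_mult_iff)
  qed
  define \<tau> where "\<tau> = sqrt (N$1$1 + N$2$2 + 2*\<delta>)"
  have tl: "\<tau> > 0" "\<tau> * \<tau> = N$1$1 + N$2$2 + 2*\<delta>" unfolding \<tau>_def using dl a n22 by auto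
  have T: "N$1$1 + N$2$2 + 2*\<delta> > 0" using a n22 dl by simp
  define S0 where "S0 = mk2 ((N$1$1 + \<delta>)/\<tau>) (N$1$2/\<tau>) (N$1$2/\<tau>) ((N$2$2 + \<delta>)/\<tau>)"
  let ?P = "\<lambda>S. symmetric_mat S \<and> pos_def S \<and> S ** S = N"
  have symS: "symmetric_mat S \<longleftrightarrow> S$1$2 = S$2$1" for S :: mat2
    unfolding symmetric_mat_def mat2_eq by (auto simp: transpose_def)
  have P0: "?P S0"
  proof (intro conjI)
    show "symmetric_mat S0" unfolding symS S0_def by simp
    have "det S0 = ((N$1$1 + \<delta>)*(N$2$2 + \<delta>) - N$1$2 * N$1$2) / (\<tau> * \<tau>)"
      unfolding S0_def using tl by (intro det_mk2_div) simp
    also have "(N$1$1 + \<delta>)*(N$2$2 + \<delta>) - N$1$2 * N$1$2 = \<delta> * (\<tau> * \<tau>)"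
      using dl dN tl by (simp add: algebra_simps)
    also have "\<delta> * (\<tau> * \<tau>) / (\<tau> * \<tau>) = \<delta>" using tl(1) by simp
    finally have "det S0 = \<delta>" .
    thus "pos_def S0" using dl tl a by (intro pd_from) (simp_all add: S0_def)
    show "S0 ** S0 = N"
    proof -
      have dd: "\<delta> * \<delta> = N$1$1 * N$2$2 - N$1$2 * N$1$2" using dl dN by simp
      have t0: "\<tau> * \<tau> \<noteq> 0" using tl(1) by simp
      have n1: "(N$1$1 + \<delta>)*(N$1$1 + \<delta>) + N$1$2*N$1$2 = N$1$1 * (\<tau> * \<tau>)"
        using tl(2) dd by (simp add: algebra_simps)
      have n2: "(N$1$1 + \<delta>)*N$1$2 + N$1$2*(N$2$2 + \<delta>) = N$1$2 * (\<tau> * \<tau>)"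
        using tl(2) by (simp add: algebra_simps)
      have n3: "N$1$2*N$1$2 + (N$2$2 + \<delta>)*(N$2$2 + \<delta>) = N$2$2 * (\<tau> * \<tau>)"
        using tl(2) dd by (simp add: algebra_simps)
      show ?thesis unfolding S0_def mk2_sq[OF tl(1)[THEN less_imp_neq, symmetric]] n1 n2 n3 mat2_eq
        using t0 s by simp
    qed
  qed
  have uniq: "S = S0" if PS: "?P S" for S
  proof -
    have sS: "S$1$2 = S$2$1" using PS symS[of S] by simp
    have pdS: "pos_def S" using PS by simp
    note pS = pd_facts[OF pdS sS]
    have SS: "(S ** S)$1$1 = N$1$1" "(S ** S)$1$2 = N$1$2" "(S ** S)$2$2 = N$2$2" using PS by auto
    hence e: "S$1$1 * S$1$1 + S$1$2 * S$1$2 = N$1$1" "S$1$1 * S$1$2 + S$1$2 * S$2$2 = N$1$2"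
             "S$1$2 * S$1$2 + S$2$2 * S$2$2 = N$2$2"
      using sS by (simp_all add: mm2)
    have dS: "det S = S$1$1 * S$2$2 - S$1$2 * S$1$2" using sS by (simp add: det_2)
    have "det S * det S = det N" using PS det_mul[of S S] by simp
    hence dSd: "det S = \<delta>" unfolding \<delta>_def using pS(2) by (metis abs_of_pos real_sqrt_abs2)
    have g: "S$2$2 > 0"
    proof -
      have "S$1$1 * S$2$2 = det S + S$1$2 * S$1$2" using dS by simp
      hence "S$1$1 * S$2$2 > 0" using pS(2) by (simp add: add_pos_nonneg)
      thus ?thesis using pS(1) by (simp add: zero_less_mult_iff)
    qed
    have "(S$1$1 + S$2$2) * (S$1$1 + S$2$2) = N$1$1 + N$2$2 + 2*\<delta>"
      using e dS dSd by (simp add: algebra_simps)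
    hence "\<tau> = sqrt ((S$1$1 + S$2$2) * (S$1$1 + S$2$2))" unfolding \<tau>_def by simp
    hence tt: "S$1$1 + S$2$2 = \<tau>" using g pS(1) by (simp add: real_sqrt_abs2)
    have "S$1$1 * \<tau> = N$1$1 + \<delta>" using e dS dSd tt[symmetric] by (simp add: algebra_simps)
    hence 1: "S$1$1 = (N$1$1 + \<delta>)/\<tau>" using tl by (simp add: field_simps)
    have "S$1$2 * \<tau> = N$1$2" using e tt[symmetric] by (simp add: algebra_simps)
    hence 2: "S$1$2 = N$1$2/\<tau>" using tl by (simp add: field_simps)
    have "S$2$2 * \<tau> = N$2$2 + \<delta>" using e dS dSd tt[symmetric] by (simp add: algebra_simps)
    hence 3: "S$2$2 = (N$2$2 + \<delta>)/\<tau>" using tl by (simp add: field_simps)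
    show ?thesis unfolding mat2_eq S0_def using 1 2 3 sS by simp
  qed
  have "?P (pd_sqrt N)" unfolding pd_sqrt_def
  proof (rule theI[of ?P S0])
    show "?P S0" by (rule P0)
    show "S = S0" if "?P S" for S using uniq that by blast
  qed
  thus ?thesis by simp
qed



lemma sqrt_prod_le_max:
  assumes "P \<ge> 0" "Q \<ge> (0::real)" shows "sqrt (P*Q) \<le> max P Q"
proof -
  have "P*Q \<le> max P Q * max P Q" using assms by (simp add: mult_mono max_def)
  hence "sqrt (P*Q) \<le> sqrt (max P Q * max P Q)" by (rule real_sqrt_le_mono)
  also have "\<dots> = max P Q" using assms by (simp add: max_def)
  finally show ?thesis .
qed

lemma Kmin_main:
  fixes s1 s2 :: mat2
  assumes pd1: "pos_def (sym_part s1)" and pd2: "pos_def (sym_part s2)"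
  defines "cG \<equiv> Bf (Gmat s1 $1$1) (Gmat s1 $1$2) (Gmat s1 $2$2) (Gmat s2 $1$1) (Gmat s2 $1$2) (Gmat s2 $2$2)"
  defines "cH \<equiv> Bf (Hmat s1 $1$1) (Hmat s1 $1$2) (Hmat s1 $2$2) (Hmat s2 $1$1) (Hmat s2 $1$2) (Hmat s2 $2$2)"
  shows "Kmin s1 s2 \<in> Kvals s1 s2 \<and> Kmin s1 s2 = sqrt (phi cG * phi cH)"
proof -
  define K where "K = sqrt (phi cG * phi cH)"
  note G1 = G_props[OF pd1] and G2 = G_props[OF pd2] and H1 = H_props[OF pd1] and H2 = H_props[OF pd2]
  have cG2: "cG \<ge> 2" unfolding cG_def by (rule Bf_ge2[OF G1(3) G2(3)])
  have cH2: "cH \<ge> 2" unfolding cH_def by (rule Bf_ge2[OF H1(3) H2(3)])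
  have lower: "K \<le> v" if v: "v \<in> Kvals s1 s2" for v
  proof -
    obtain A B where AB: "det A = 1" "det B = 1"
      and vdef: "v = max (lambda_max (transpose B ** Gmat s1 ** B) * lambda_max (transpose A ** Hmat s1 ** A))
                        (lambda_max (transpose B ** Gmat s2 ** B) * lambda_max (transpose A ** Hmat s2 ** A))"
      using v unfolding Kvals_def SL2_def by blast
    define a1 where "a1 = Bf (wx B) (wy B) (wz B) (Gmat s1 $1$1) (Gmat s1 $1$2) (Gmat s1 $2$2)"
    define a2 where "a2 = Bf (wx B) (wy B) (wz B) (Gmat s2 $1$1) (Gmat s2 $1$2) (Gmat s2 $2$2)"
    define b1 where "b1 = Bf (wx A) (wy A) (wz A) (Hmat s1 $1$1) (Hmat s1 $1$2) (Hmat s1 $2$2)"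
    define b2 where "b2 = Bf (wx A) (wy A) (wz A) (Hmat s2 $1$1) (Hmat s2 $1$2) (Hmat s2 $2$2)"
    have wA: "inH (wx A) (wy A) (wz A)" and wB: "inH (wx B) (wy B) (wz B)" using w_inH AB by auto
    have v2: "v = max (phi a1 * phi b1) (phi a2 * phi b2)"
      unfolding vdef a1_def a2_def b1_def b2_def
      using lam_congr[OF AB(2) G1(2) G1(1)] lam_congr[OF AB(2) G2(2) G2(1)]
            lam_congr[OF AB(1) H1(2) H1(1)] lam_congr[OF AB(1) H2(2) H2(1)] by simp
    have a12: "a1 \<ge> 2" "a2 \<ge> 2" unfolding a1_def a2_def using Bf_ge2 wB G1(3) G2(3) by auto
    have b12: "b1 \<ge> 2" "b2 \<ge> 2" unfolding b1_def b2_def using Bf_ge2 wA H1(3) H2(3) by auto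
    have tG: "phi cG \<le> phi a1 * phi a2" unfolding cG_def a1_def a2_def by (rule tri[OF wB G1(3) G2(3)])
    have tH: "phi cH \<le> phi b1 * phi b2" unfolding cH_def b1_def b2_def by (rule tri[OF wA H1(3) H2(3)])
    have pa: "phi a1 > 0" "phi a2 > 0" "phi b1 > 0" "phi b2 > 0" "phi cG > 0" "phi cH > 0"
      using phi_pos a12 b12 cG2 cH2 by auto
    have "phi cG * phi cH \<le> (phi a1 * phi a2) * (phi b1 * phi b2)"
      using tG tH pa by (simp add: mult_mono)
    also have "\<dots> = (phi a1 * phi b1) * (phi a2 * phi b2)" by (simp add: algebra_simps)
    finally have "K \<le> sqrt ((phi a1 * phi b1) * (phi a2 * phi b2))" unfolding K_def by (rule real_sqrt_le_mono)
    also have "\<dots> \<le> v" unfolding v2 using pa by (intro sqrt_prod_le_max) auto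
    finally show ?thesis .
  qed
  have attained: "K \<in> Kvals s1 s2"
  proof -
    define kG where "kG = sqrt (2 + cG)"
    define kH where "kH = sqrt (2 + cH)"
    note mG = mid[OF G1(3) G2(3), folded cG_def, folded kG_def]
    note mH = mid[OF H1(3) H2(3), folded cH_def, folded kH_def]
    obtain B where B: "det B = 1" "wx B = (Gmat s1 $1$1 + Gmat s2 $1$1) / kG" "wy B = (Gmat s1 $1$2 + Gmat s2 $1$2) / kG"
      "wz B = (Gmat s1 $2$2 + Gmat s2 $2$2) / kG" using chol mG by blast
    obtain A where A: "det A = 1" "wx A = (Hmat s1 $1$1 + Hmat s2 $1$1) / kH" "wy A = (Hmat s1 $1$2 + Hmat s2 $1$2) / kH"
      "wz A = (Hmat s1 $2$2 + Hmat s2 $2$2) / kH" using chol mH by blast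
    have kG2: "kG \<ge> 2" unfolding kG_def using cG2 by (simp add: real_le_rsqrt)
    have kH2: "kH \<ge> 2" unfolding kH_def using cH2 by (simp add: real_le_rsqrt)
    have e1: "lambda_max (transpose B ** Gmat s1 ** B) = phi kG" "lambda_max (transpose B ** Gmat s2 ** B) = phi kG"
      using lam_congr[OF B(1) G1(2) G1(1)] lam_congr[OF B(1) G2(2) G2(1)] B mG by simp_all
    have e2: "lambda_max (transpose A ** Hmat s1 ** A) = phi kH" "lambda_max (transpose A ** Hmat s2 ** A) = phi kH"
      using lam_congr[OF A(1) H1(2) H1(1)] lam_congr[OF A(1) H2(2) H2(1)] A mH by simp_all
    have "K = phi kG * phi kH"
    proof -
      have "phi kG = sqrt (phi cG)" using mG phi_pos[OF kG2] by (metis less_eq_real_def real_sqrt_unique)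
      moreover have "phi kH = sqrt (phi cH)" using mH phi_pos[OF kH2] by (metis less_eq_real_def real_sqrt_unique)
      ultimately show ?thesis unfolding K_def by (simp add: real_sqrt_mult)
    qed
    hence "K = max (lambda_max (transpose B ** Gmat s1 ** B) * lambda_max (transpose A ** Hmat s1 ** A))
                   (lambda_max (transpose B ** Gmat s2 ** B) * lambda_max (transpose A ** Hmat s2 ** A))"
      using e1 e2 by simp
    thus ?thesis unfolding Kvals_def SL2_def using A(1) B(1) by blast
  qed
  have "Kmin s1 s2 = K" unfolding Kmin_def using attained lower by (rule cInf_eq_minimum)
  thus ?thesis using attained unfolding K_def by simp
qed



lemma lam_sym2:
  fixes M :: mat2
  assumes s: "M$1$2 = M$2$1"
  shows "lambda_min M + lambda_max M = M$1$1 + M$2$2 \<and> lambda_min M * lambda_max M = det M \<and> lambda_min M \<le> lambda_max M"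
proof -
  define t where "t = M$1$1 + M$2$2"
  define q where "q = sqrt (t^2 - 4 * det M)"
  have disc: "t^2 - 4 * det M = (M$1$1 - M$2$2)^2 + 4 * (M$1$2)^2"
    unfolding t_def det_2 using s by (simp add: power2_eq_square algebra_simps)
  hence d0: "t^2 - 4 * det M \<ge> 0" by simp
  have qq: "q*q = t^2 - 4 * det M" unfolding q_def using d0 by simp
  have q0: "q \<ge> 0" unfolding q_def using d0 by simp
  have L: "lambda_max M = (t + q)/2" "lambda_min M = (t - q)/2" using lam_sym[OF s] unfolding t_def q_def by auto
  show ?thesis unfolding L using qq q0 unfolding t_def[symmetric] by (simp add: field_simps power2_eq_square)
qed

lemma phi_formula:
  assumes d1: "d1 > 0" and d2: "d2 > (0::real)"
  shows "phi (m / sqrt (d1*d2)) = (m + sqrt (m^2 - 4*d1*d2)) / (2 * sqrt (d1*d2))"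
proof -
  define r where "r = sqrt (d1*d2)"
  have r: "r > 0" "r*r = d1*d2" unfolding r_def using d1 d2 by auto
  have "(m/r)^2 - 4 = (m^2 - 4*(r*r)) / (r*r)" using r(1) by (simp add: field_simps power2_eq_square)
  hence "(m/r)^2 - 4 = (m^2 - 4*d1*d2) / (r*r)" using r(2) by simp
  hence "sqrt ((m/r)^2 - 4) = sqrt (m^2 - 4*d1*d2) / r"
    using r(1) by (simp add: real_sqrt_divide real_sqrt_mult_self)
  thus ?thesis unfolding phi_def r_def[symmetric] using r(1) by (simp add: field_simps)
qed

lemma final_alg:
  assumes l1: "l1 > 0" and l12: "l1 \<le> l2" and d1: "d1 > 0" and d2: "d2 > (0::real)"
    and prod: "l1 * l2 = d2 / d1" and sum: "l1 + l2 = m / d1"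
  shows "sqrt (phi (m / sqrt (d1*d2)) * phi ((d1+d2) / sqrt (d1*d2))) = max (1 / sqrt l1) (sqrt l2)"
proof -
  define p1 where "p1 = sqrt l1"
  define p2 where "p2 = sqrt l2"
  have p: "p1 > 0" "p2 > 0" "p1*p1 = l1" "p2*p2 = l2" "p1 \<le> p2"
    unfolding p1_def p2_def using l1 l12 by auto
  have d2e: "d2 = d1 * (p1*p1) * (p2*p2)" using prod d1 p by (simp add: field_simps)
  have me: "m = d1 * (p1*p1 + p2*p2)" using sum d1 p by (simp add: field_simps)
  have sq: "sqrt (d1*d2) = d1*p1*p2"
  proof -
    have "d1*d2 = (d1*p1*p2) * (d1*p1*p2)" unfolding d2e by (simp add: algebra_simps)
    hence "sqrt (d1*d2) = sqrt ((d1*p1*p2) * (d1*p1*p2))" by (rule arg_cong)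
    also have "\<dots> = d1*p1*p2" using d1 p by (simp only: real_sqrt_abs2) simp
    finally show ?thesis .
  qed
  define r where "r = p2/p1"
  define q where "q = p1*p2"
  have r: "r > 0" "r \<ge> 1" unfolding r_def using p by auto
  have q: "q > 0" unfolding q_def using p by auto
  have A: "m / sqrt (d1*d2) = r + 1/r" unfolding sq me r_def using p(1,2) d1 by (simp add: field_simps)
  have B: "(d1+d2) / sqrt (d1*d2) = q + 1/q" unfolding sq unfolding d2e q_def using p(1,2) d1 by (simp add: field_simps)
  have "1/r \<le> 1" using r by simp
  hence "1/r \<le> r" using r by linarith
  hence pA: "phi (m / sqrt (d1*d2)) = r" unfolding A phi_inv[OF r(1)] by (rule max_absorb1)
  have pB: "phi ((d1+d2) / sqrt (d1*d2)) = max q (1/q)" unfolding B phi_inv[OF q] ..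
  have RHS: "max (1 / sqrt l1) (sqrt l2) = max (1/p1) p2" unfolding p1_def p2_def ..
  show ?thesis
  proof (cases "q \<ge> 1")
    case True
    have "1/q \<le> 1" using True by simp
    hence "1/q \<le> q" using True by linarith
    hence "max q (1/q) = q" by (rule max_absorb1)
    hence "phi (m / sqrt (d1*d2)) * phi ((d1+d2) / sqrt (d1*d2)) = p2*p2"
      unfolding pA pB r_def q_def using p(1) by simp
    hence L: "sqrt (phi (m / sqrt (d1*d2)) * phi ((d1+d2) / sqrt (d1*d2))) = p2"
      using p(2) by simp
    have "1/p1 \<le> p2" using True p(1) unfolding q_def by (simp add: field_simps)
    hence "max (1/p1) p2 = p2" by (rule max_absorb2)
    thus ?thesis unfolding L RHS by simp
  next
    case False
    have "1/q \<ge> 1" using False q by simp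
    hence "q \<le> 1/q" using False by linarith
    hence "max q (1/q) = 1/q" by (rule max_absorb2)
    hence "phi (m / sqrt (d1*d2)) * phi ((d1+d2) / sqrt (d1*d2)) = (1/p1)*(1/p1)"
      unfolding pA pB r_def q_def using p(1,2) by simp
    hence L: "sqrt (phi (m / sqrt (d1*d2)) * phi ((d1+d2) / sqrt (d1*d2))) = 1/p1"
      using p(1) by (simp only: real_sqrt_abs2) simp
    have "p2 \<le> 1/p1" using False p(1) unfolding q_def by (simp add: field_simps)
    hence "max (1/p1) p2 = 1/p1" by (rule max_absorb1)
    thus ?thesis unfolding L RHS by simp
  qed
qed


lemma trace_sandwich:
  fixes S A :: mat2
  assumes "S$1$2 = S$2$1"
  shows "(S ** A ** S)$1$1 + (S ** A ** S)$2$2 = A$1$1 * (S**S)$1$1 + A$1$2 * (S**S)$2$1 + A$2$1 * (S**S)$1$2 + A$2$2 * (S**S)$2$2"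
  using assms by (simp add: mm2 algebra_simps)

lemma symm_entries: "symmetric_mat M \<Longrightarrow> M$1$2 = M$2$1"
proof -
  assume "symmetric_mat M"
  hence "(transpose M)$1$2 = M$1$2" unfolding symmetric_mat_def by simp
  thus ?thesis by (simp add: transpose_def)
qed

theorem mainTheorem13:
  fixes \<sigma>1 \<sigma>2 :: "real^2^2"
  assumes pd1: "pos_def (sym_part \<sigma>1)"
      and pd2: "pos_def (sym_part \<sigma>2)"
  defines "d1 \<equiv> det (sym_part \<sigma>1)"
      and "d2 \<equiv> det (sym_part \<sigma>2)"
  defines "m \<equiv> \<sigma>2$1$1 * \<sigma>1$2$2 + \<sigma>1$1$1 * \<sigma>2$2$2
                 - (1/2) * (\<sigma>2$1$2 + \<sigma>2$2$1) * (\<sigma>1$1$2 + \<sigma>1$2$1)"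
      and "n \<equiv> (1 / sqrt (d1 * d2)) * (det \<sigma>1 + det \<sigma>2
                 - (1/2) * (\<sigma>1$2$1 - \<sigma>1$1$2) * (\<sigma>2$2$1 - \<sigma>2$1$2))"
  shows "Kmin \<sigma>1 \<sigma>2 \<in> Kvals \<sigma>1 \<sigma>2
       \<and> Kmin \<sigma>1 \<sigma>2 = sqrt ((m + sqrt (m^2 - 4 * d1 * d2)) / (2 * sqrt (d1 * d2))
                               * ((n + sqrt (n^2 - 4)) / 2))
       \<and> (symmetric_mat \<sigma>1 \<and> symmetric_mat \<sigma>2 \<longrightarrow>
           (let S = pd_sqrt (matrix_inv \<sigma>1); P = S ** \<sigma>2 ** S in
            Kmin \<sigma>1 \<sigma>2 = max (1 / sqrt (lambda_min P)) (sqrt (lambda_max P))))"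
proof -
  have d1p: "d1 > 0" and d2p: "d2 > 0" unfolding d1_def d2_def using sym_d_pos(2) pd1 pd2 by auto
  have cG: "Bf (Gmat \<sigma>1 $1$1) (Gmat \<sigma>1 $1$2) (Gmat \<sigma>1 $2$2) (Gmat \<sigma>2 $1$1) (Gmat \<sigma>2 $1$2) (Gmat \<sigma>2 $2$2) = m / sqrt (d1*d2)"
    unfolding Bf_G[OF pd1 pd2] m_def d1_def d2_def ..
  have cH: "Bf (Hmat \<sigma>1 $1$1) (Hmat \<sigma>1 $1$2) (Hmat \<sigma>1 $2$2) (Hmat \<sigma>2 $1$1) (Hmat \<sigma>2 $1$2) (Hmat \<sigma>2 $2$2) = n"
    unfolding Bf_H[OF pd1 pd2] n_def d1_def d2_def ..
  have cG2: "m / sqrt (d1*d2) \<ge> 2" unfolding cG[symmetric] by (rule Bf_ge2[OF G_props(3)[OF pd1] G_props(3)[OF pd2]])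
  note K = Kmin_main[OF pd1 pd2, unfolded cG cH]
  have KM: "Kmin \<sigma>1 \<sigma>2 \<in> Kvals \<sigma>1 \<sigma>2" using K by (rule conjunct1)
  have KF: "Kmin \<sigma>1 \<sigma>2 = sqrt (phi (m / sqrt (d1*d2)) * phi n)" using K by (rule conjunct2)
  have F: "Kmin \<sigma>1 \<sigma>2 = sqrt ((m + sqrt (m^2 - 4 * d1 * d2)) / (2 * sqrt (d1 * d2)) * ((n + sqrt (n^2 - 4)) / 2))"
    unfolding KF phi_formula[OF d1p d2p] phi_def[of n] ..
  have SYM: "Kmin \<sigma>1 \<sigma>2 = max (1 / sqrt (lambda_min P)) (sqrt (lambda_max P))"
    if sy1: "symmetric_mat \<sigma>1" and sy2: "symmetric_mat \<sigma>2"
      and Sd: "S = pd_sqrt (matrix_inv \<sigma>1)" and Pd: "P = S ** \<sigma>2 ** S" for S P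
  proof -
    have s1: "\<sigma>1$1$2 = \<sigma>1$2$1" and s2: "\<sigma>2$1$2 = \<sigma>2$2$1" using symm_entries sy1 sy2 by auto
    have sp1: "sym_part \<sigma>1 = \<sigma>1" unfolding mat2_eq using s1 by simp
    have sp2: "sym_part \<sigma>2 = \<sigma>2" unfolding mat2_eq using s2 by simp
    have dd1: "det \<sigma>1 = d1" and dd2: "det \<sigma>2 = d2" unfolding d1_def d2_def sp1 sp2 by auto
    have a11: "\<sigma>1$1$1 > 0" using sym_d_pos(1)[OF pd1] .
    have a22: "\<sigma>1$2$2 > 0"
    proof -
      have "\<sigma>1$1$1 * \<sigma>1$2$2 = d1 + \<sigma>1$1$2 * \<sigma>1$1$2" using dd1 s1 by (simp add: det_2)
      hence "\<sigma>1$1$1 * \<sigma>1$2$2 > 0" using d1p by (simp add: add_pos_nonneg)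
      thus ?thesis using a11 by (simp add: zero_less_mult_iff)
    qed
    define E where "E = mk2 (\<sigma>1$2$2 / d1) (- \<sigma>1$1$2 / d1) (- \<sigma>1$2$1 / d1) (\<sigma>1$1$1 / d1)"
    have Einv: "matrix_inv \<sigma>1 = E" unfolding E_def dd1[symmetric] by (rule minv) (use d1p dd1 in simp)
    have dE: "det E = 1 / d1"
    proof -
      have "det E = (\<sigma>1$1$1 * \<sigma>1$2$2 - \<sigma>1$1$2 * \<sigma>1$2$1) / (d1 * d1)"
        unfolding E_def det_2[of "mk2 _ _ _ _"] using d1p by (simp add: field_simps)
      also have "\<sigma>1$1$1 * \<sigma>1$2$2 - \<sigma>1$1$2 * \<sigma>1$2$1 = d1" using dd1 by (simp add: det_2)
      finally show ?thesis using d1p by simp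
    qed
    have Ep: "E$1$2 = E$2$1" "E$1$1 > 0" "det E > 0" unfolding E_def using s1 a22 d1p dE by (simp_all add: E_def)
    have SP: "symmetric_mat S" "S ** S = E" using pd_sqrt_props[OF Ep] unfolding Sd Einv by auto
    have sS: "S$1$2 = S$2$1" using symm_entries SP(1) by blast
    have Psym: "P$1$2 = P$2$1" unfolding Pd using sS s2 by (simp add: mm2 algebra_simps)
    have tr: "P$1$1 + P$2$2 = m / d1"
    proof -
      have "P$1$1 + P$2$2 = \<sigma>2$1$1 * E$1$1 + \<sigma>2$1$2 * E$2$1 + \<sigma>2$2$1 * E$1$2 + \<sigma>2$2$2 * E$2$2"
        unfolding Pd trace_sandwich[OF sS] SP(2) ..
      also have "\<dots> = m / d1" unfolding E_def m_def using s1 s2 d1p by (simp add: field_simps)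
      finally show ?thesis .
    qed
    have dP: "det P = d2 / d1"
    proof -
      have "det P = det S * det \<sigma>2 * det S" unfolding Pd by (simp add: det_mul)
      also have "\<dots> = det (S ** S) * det \<sigma>2" by (simp add: det_mul)
      also have "\<dots> = d2 / d1" unfolding SP(2) dE dd2 by simp
      finally show ?thesis .
    qed
    note L = lam_sym2[OF Psym]
    have sum: "lambda_min P + lambda_max P = m / d1" using L tr by simp
    have prod: "lambda_min P * lambda_max P = d2 / d1" using L dP by simp
    have le: "lambda_min P \<le> lambda_max P" using L by simp
    have mpos: "m > 0"
    proof -
      have "m / sqrt (d1*d2) > 0" using cG2 by simp
      moreover have "sqrt (d1*d2) > 0" using d1p d2p by simp
      ultimately show ?thesis by (simp add: zero_less_divide_iff)
    qed
    have l1: "lambda_min P > 0"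
    proof (rule ccontr)
      assume "\<not> lambda_min P > 0"
      moreover have "lambda_min P * lambda_max P > 0" using prod d1p d2p by simp
      ultimately have "lambda_min P < 0" "lambda_max P < 0" by (auto simp: zero_less_mult_iff)
      hence "lambda_min P + lambda_max P < 0" by simp
      moreover have "m / d1 > 0" using mpos d1p by simp
      ultimately show False using sum by simp
    qed
    have nn: "n = (d1 + d2) / sqrt (d1*d2)" unfolding n_def dd1 dd2 using s1 s2 by simp
    show ?thesis unfolding KF nn by (rule final_alg[OF l1 le d1p d2p prod sum])
  qed
  show ?thesis
  proof (intro conjI impI)
    show "Kmin \<sigma>1 \<sigma>2 \<in> Kvals \<sigma>1 \<sigma>2" by (rule KM)
    show "Kmin \<sigma>1 \<sigma>2 = sqrt ((m + sqrt (m^2 - 4 * d1 * d2)) / (2 * sqrt (d1 * d2)) * ((n + sqrt (n^2 - 4)) / 2))" by (rule F)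
    assume "symmetric_mat \<sigma>1 \<and> symmetric_mat \<sigma>2"
    thus "let S = pd_sqrt (matrix_inv \<sigma>1); P = S ** \<sigma>2 ** S in
            Kmin \<sigma>1 \<sigma>2 = max (1 / sqrt (lambda_min P)) (sqrt (lambda_max P))"
      unfolding Let_def by (intro SYM) auto
  qed
qed


end
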